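(* Let $(M,a)$ be Kerr–AdS parameters with $(\mathfrak m,\mathfrak a)\in\mathscr P$, and for $\tilde\lambda\in\mathbb R$ define on $x\in[0,1]$ $$W_1(x)=\Xi^2-\Big[\Xi a^2\omega_-^2+2a\omega_-\Xi\frac{a^2}{l^2}\Big]x^2(1-x^2)-\tilde\lambda\,\Delta_x(1-x^2).$$ Then: (1) if $\tilde\lambda<\Xi^2$, then $W_1>0$ on $[0,1]$; (2) if $\tilde\lambda=\Xi^2$, then $W_1>0$ on $(0,1]$ and $W_1(0)=0$; (3) if $\tilde\lambda>\Xi^2$, then $W_1$ has exactly one root $x_0$ in $[0,1]$, this root satisfies $x_0\in(0,1)$, and $\frac{dW_1}{dx}(x)\ge c\,\tilde\lambda x$ for all $x\in[0,1]$, for a constant $c>0$ depending only on the black hole parameters.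
   Context: $l=\sqrt{-3/\Lambda}$ with $\Lambda<0$; $\Delta(r)=(r^2+a^2)(1+r^2/l^2)-2Mr$ with roots $0<r_-<r_+$, $0<a<l$, $r_+^2>al$ (i.e. $(\mathfrak m,\mathfrak a)=(M\sqrt3/l,a\sqrt3/l)$ lies in the subextremal, Hawking–Reall-bound parameter set $\mathscr P$). $\Xi=1-a^2/l^2$, $\Delta_x=1-\frac{a^2}{l^2}x^2$, $\omega_-=\frac{a\Xi}{r_-^2+a^2}$. *)

theory Defs
  imports "HOL-Analysis.Analysis"
begin

text \<open>Kerr--AdS quantities; l = sqrt(-3/Lambda) > 0.\<close>

definition KDelta :: "real \<Rightarrow> real \<Rightarrow> real \<Rightarrow> real \<Rightarrow> real" where
  "KDelta M a l r = (r^2 + a^2) * (1 + r^2 / l^2) - 2 * M * r"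

definition Xi :: "real \<Rightarrow> real \<Rightarrow> real" where
  "Xi a l = 1 - a^2 / l^2"

definition Delta_x :: "real \<Rightarrow> real \<Rightarrow> real \<Rightarrow> real" where
  "Delta_x a l x = 1 - (a^2 / l^2) * x^2"

definition omega_minus :: "real \<Rightarrow> real \<Rightarrow> real \<Rightarrow> real" where
  "omega_minus a l rm = a * Xi a l / (rm^2 + a^2)"

text \<open>Kerr--AdS parameters in the subextremal, Hawking--Reall-bound set P,
  with r_- and r_+ the roots of Delta.\<close>
definition KAdS_params :: "real \<Rightarrow> real \<Rightarrow> real \<Rightarrow> real \<Rightarrow> real \<Rightarrow> bool" where
  "KAdS_params M a l rm rp \<longleftrightarrow>
     0 < l \<and> 0 < a \<and> a < l \<and> 0 < rm \<and> rm < rp \<and>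
     {r. 0 < r \<and> KDelta M a l r = 0} = {rm, rp} \<and>
     rp^2 > a * l"

definition W1 :: "real \<Rightarrow> real \<Rightarrow> real \<Rightarrow> real \<Rightarrow> real \<Rightarrow> real" where
  "W1 a l rm lam x =
     (Xi a l)^2
     - (Xi a l * a^2 * (omega_minus a l rm)^2
        + 2 * a * omega_minus a l rm * Xi a l * (a^2 / l^2)) * x^2 * (1 - x^2)
     - lam * Delta_x a l x * (1 - x^2)"

end

theory Submission
  imports Defs
begin

definition P :: "real \<Rightarrow> real \<Rightarrow> real \<Rightarrow> real \<Rightarrow> real \<Rightarrow> real" where
 "P X al B lam x = X^2 - X^2*B*x^2*(1-x^2) - lam*(1-al*x^2)*(1-x^2)"

lemma P1:
  assumes "X>0" "0<al" "al<1" "0\<le>B" "B<1+al" "lam<X^2" "0\<le>x" "x\<le>1"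
  shows "P X al B lam x > 0"
proof -
  define y where "y = x^2"
  have y: "0 \<le> y" "y \<le> 1" using assms by (auto simp: y_def power_le_one)
  have P: "P X al B lam x = X^2 - X^2*B*y*(1-y) - lam*(1-al*y)*(1-y)" by (simp add: P_def y_def)
  have q0: "1/4 - y*(1-y) = (y-1/2)^2" by (simp add: power2_eq_square algebra_simps)
  have q: "y*(1-y) \<le> 1/4" using q0 by (smt (verit) zero_le_power2)
  have brk: "y*(1+al-al*y) - B*y*(1-y) \<ge> 0"
  proof -
    have "(1+al-al*y) - B*(1-y) = (1+al-B)*(1-y) + y" by (simp add: algebra_simps)
    also have "\<dots> \<ge> 0" using y assms by (simp add: mult_nonneg_nonneg)
    finally have "y*((1+al-al*y) - B*(1-y)) \<ge> 0" using y by simp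
    thus ?thesis by (simp add: algebra_simps)
  qed
  show ?thesis
  proof (cases "lam \<le> 0")
    case True
    have "B*(y*(1-y)) \<le> B*(1/4)" using q assms by (intro mult_left_mono) auto
    hence "1 - B*y*(1-y) > 0" using assms by (simp only: mult.assoc)
    hence "X^2*(1 - B*y*(1-y)) > 0" using assms by simp
    moreover have "lam*((1-al*y)*(1-y)) \<le> 0" using True y assms
      proof -
          have "al*y \<le> al" using y assms by (simp add: mult_left_le)
          hence "al*y \<le> 1" using assms by linarith
          thus ?thesis using y True by (intro mult_nonpos_nonneg mult_nonneg_nonneg) auto
        qed
    ultimately show ?thesis unfolding P by (simp add: algebra_simps)
  next
    case False
    show ?thesis
    proof (cases "y = 1")
      case True thus ?thesis unfolding P using assms by simp
    next
      case False
      have pos: "(1-al*y)*(1-y) > 0" using y False assms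
        proof -
          have "al*y \<le> al" using y assms by (simp add: mult_left_le)
          hence "al*y < 1" using assms by linarith
          thus ?thesis using y False by simp
        qed
      have "lam*((1-al*y)*(1-y)) < X^2*((1-al*y)*(1-y))" using pos assms by (intro mult_strict_right_mono)
      moreover have "X^2*(y*(1+al-al*y) - B*y*(1-y)) \<ge> 0" using brk by simp
      ultimately show ?thesis unfolding P by (simp add: algebra_simps)
    qed
  qed
qed

lemma P_y: "P X al B lam x = X^2 - X^2*B*(x^2)*(1-x^2) - lam*(1-al*(x^2))*(1-x^2)"
  by (simp add: P_def)

lemma P2:
  assumes "X>0" "0<al" "al<1" "B<1+al" "0<x" "x\<le>1"
  shows "P X al B (X^2) x > 0"
proof -
  define y where "y = x^2"
  have y: "0 < y" "y \<le> 1" using assms by (auto simp: y_def power_le_one)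
  have "P X al B (X^2) x = X^2*(y*((1+al-B)*(1-y)+y))" by (simp add: P_def y_def algebra_simps)
  moreover have "(1+al-B)*(1-y) \<ge> 0" using y assms by simp
  hence "(1+al-B)*(1-y)+y > 0" using y by linarith
  ultimately show ?thesis using y assms by simp
qed

lemma P20: "P X al B (X^2) 0 = 0" by (simp add: P_def)

definition dd :: "real \<Rightarrow> real \<Rightarrow> real" where "dd al B = min (1+al-B) (1-al)"

lemma inner:
  fixes X lam t :: real
  assumes "X>0" "0<al" "al<1" "0\<le>B" "B<1+al" "lam>X^2" "0\<le>t" "t\<le>1"
  shows "- (X^2*B*(1-2*t)) + lam*(1+al-2*al*t) \<ge> lam * dd al B"
proof -
  have "X^2 > 0" using assms by simp
  hence lam: "lam > 0" using assms by linarith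
  have d1: "dd al B \<le> 1+al-B" "dd al B \<le> 1-al" by (auto simp: dd_def)
  show ?thesis
  proof (cases "t \<ge> 1/2")
    case True
    have "X^2*B*(1-2*t) \<le> 0" using True assms by (intro mult_nonneg_nonpos) auto
    moreover have "1+al-2*al*t \<ge> 1-al" using assms by (simp add: mult_left_le)
    hence "lam*(1+al-2*al*t) \<ge> lam*dd al B" using d1 lam
      by (intro mult_left_mono) auto
    ultimately show ?thesis by linarith
  next
    case False
    have "X^2*(B*(1-2*t)) \<le> lam*(B*(1-2*t))" using False assms
      by (intro mult_right_mono) auto
    moreover have "(1+al-2*al*t) - B*(1-2*t) \<ge> dd al B"
    proof (cases "B \<ge> al")
      case True
      have "(1+al-2*al*t) - B*(1-2*t) = (1+al-B) + 2*t*(B-al)" by (simp add: algebra_simps)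
      also have "\<dots> \<ge> 1+al-B" using True assms by simp
      finally show ?thesis using d1 by linarith
    next
      case False
      have "(1+al-2*al*t) - B*(1-2*t) = 1 + (al-B)*(1-2*t)" by (simp add: algebra_simps)
      also have "\<dots> \<ge> 1" using False \<open>\<not> t \<ge> 1/2\<close> by simp
      finally show ?thesis using d1 assms by linarith
    qed
    hence "lam*((1+al-2*al*t) - B*(1-2*t)) \<ge> lam*dd al B" using lam
      by (intro mult_left_mono) auto
    ultimately show ?thesis by (simp add: algebra_simps)
  qed
qed

lemma dd_pos: "0<al \<Longrightarrow> al<1 \<Longrightarrow> B<1+al \<Longrightarrow> dd al B > 0"
  by (simp add: dd_def min_def)

lemma P_diff: "P X al B lam x1 - P X al B lam x2 = (x1^2 - x2^2) *
   (- (X^2*B*(1-2*((x1^2+x2^2)/2))) + lam*(1+al-2*al*((x1^2+x2^2)/2)))"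
  by (simp add: P_def field_simps power2_eq_square power4_eq_xxxx)

lemma P_deriv: "((P X al B lam) has_real_derivative
   (2*x*(- (X^2*B*(1-2*x^2)) + lam*(1+al-2*al*x^2)))) (at x)"
  unfolding P_def
  by (rule derivative_eq_intros refl | simp)+ (simp add: algebra_simps power2_eq_square)

lemma P_cont: "isCont (P X al B lam) x"
  using P_deriv DERIV_isCont by blast

theorem lemma3p1:
  fixes M a l rm rp :: real
  assumes "KAdS_params M a l rm rp"
  shows "(\<forall>lam. lam < (Xi a l)^2 \<longrightarrow> (\<forall>x\<in>{0..1}. W1 a l rm lam x > 0))
    \<and> (\<forall>lam. lam = (Xi a l)^2 \<longrightarrow>
          (\<forall>x\<in>{0<..1}. W1 a l rm lam x > 0) \<and> W1 a l rm lam 0 = 0)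
    \<and> (\<forall>lam. lam > (Xi a l)^2 \<longrightarrow>
          (\<exists>!x0. x0 \<in> {0..1} \<and> W1 a l rm lam x0 = 0)
          \<and> (\<forall>x0\<in>{0..1}. W1 a l rm lam x0 = 0 \<longrightarrow> x0 \<in> {0<..<1}))
    \<and> (\<exists>c>0. \<forall>lam. lam > (Xi a l)^2 \<longrightarrow>
          (\<forall>x\<in>{0..1}. deriv (W1 a l rm lam) x \<ge> c * lam * x))"
proof -
  have l: "0 < l" "0 < a" "a < l" "0 < rm" using assms by (auto simp: KAdS_params_def)
  define al where "al = a^2/l^2"
  define X where "X = Xi a l"
  define s where "s = a^2/(rm^2+a^2)"
  define B where "B = X * (s^2) + 2 * s * al"
  have "a^2 < l^2" using l by (simp add: power_strict_mono)
  hence al: "0 < al" "al < 1" using l by (auto simp: al_def)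
  have X: "X = 1 - al" by (simp add: X_def Xi_def al_def)
  have Xp: "X > 0" using X al by simp
  have "rm^2 > 0" "a^2 > 0" using l by auto
  hence d: "rm^2+a^2 > 0" by linarith
  have s0: "0 < s" unfolding s_def using d \<open>a^2>0\<close> by (rule divide_pos_pos[rotated])
  have s1: "s < 1" unfolding s_def using d \<open>rm^2>0\<close> by (simp add: divide_less_eq)
  note s = s0 s1
  have B0: "0 \<le> B" using Xp s al by (simp add: B_def)
  have "1 + al - B = (1 - s^2) + al*(1-s)^2" by (simp add: B_def X power2_eq_square algebra_simps)
  moreover have "s^2 < 1" using s by (simp add: power_less_one_iff)
  moreover have "al*(1-s)^2 \<ge> 0" using al by simp
  ultimately have B1: "B < 1 + al" by linarith
  have aw: "a * omega_minus a l rm = X * s"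
    by (simp add: omega_minus_def s_def X_def power2_eq_square)
  have K: "Xi a l * a^2 * (omega_minus a l rm)^2
        + 2 * a * omega_minus a l rm * Xi a l * (a^2 / l^2) = X^2 * B"
  proof -
    have "Xi a l * a^2 * (omega_minus a l rm)^2 = X * (a * omega_minus a l rm)^2"
      by (simp add: X_def power_mult_distrib)
    moreover have "2 * a * omega_minus a l rm * Xi a l * (a^2 / l^2) = 2 * (a * omega_minus a l rm) * X * al"
      by (simp add: X_def al_def)
    ultimately show ?thesis unfolding aw by (simp add: B_def power2_eq_square algebra_simps)
  qed
  have W: "\<And>lam. W1 a l rm lam = P X al B lam"
    unfolding W1_def Delta_x_def K P_def al_def X_def by simp
  have part3: "(\<exists>!x0. x0 \<in> {0..1} \<and> P X al B lam x0 = 0)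
          \<and> (\<forall>x0\<in>{0..1}. P X al B lam x0 = 0 \<longrightarrow> x0 \<in> {0<..<1})" if lam: "lam > X^2" for lam
  proof -
    have P0: "P X al B lam 0 < 0" using lam by (simp add: P_def)
    have P1': "P X al B lam 1 > 0" using Xp by (simp add: P_def)
    have "X^2 > 0" using Xp by simp
    hence "lam > 0" using lam by linarith
    hence dpos: "lam * dd al B > 0" using dd_pos[OF al B1] by (rule mult_pos_pos)
    obtain x where x: "0 \<le> x" "x \<le> 1" "P X al B lam x = 0"
    proof -
      have "\<exists>x\<ge>0. x \<le> 1 \<and> P X al B lam x = 0"
        by (rule IVT') (use P0 P1' in \<open>auto intro!: continuous_at_imp_continuous_on P_cont\<close>)
      thus ?thesis using that by blast
    qed
    have uniq: "x1 = x2" if h: "x1 \<in> {0..1}" "x2 \<in> {0..1}" "P X al B lam x1 = 0" "P X al B lam x2 = 0" for x1 x2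
    proof -
      have t: "0 \<le> (x1^2+x2^2)/2" "(x1^2+x2^2)/2 \<le> 1"
        using h(1,2) power_le_one[of x1 2] power_le_one[of x2 2] by auto
      have G: "- (X^2*B*(1-2*((x1^2+x2^2)/2))) + lam*(1+al-2*al*((x1^2+x2^2)/2)) > 0"
        using inner[OF Xp al B0 B1 lam t] dpos by linarith
      have "(x1^2 - x2^2) * (- (X^2*B*(1-2*((x1^2+x2^2)/2))) + lam*(1+al-2*al*((x1^2+x2^2)/2))) = 0"
        using P_diff[of X al B lam x1 x2] h by simp
      hence "x1^2 = x2^2" using G by simp
      thus ?thesis using h(1,2) by (simp add: power2_eq_iff_nonneg)
    qed
    show ?thesis
    proof
      show "\<exists>!x0. x0 \<in> {0..1} \<and> P X al B lam x0 = 0"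
        using x uniq by (intro ex1I[of _ x]) auto
      show "\<forall>x0\<in>{0..1}. P X al B lam x0 = 0 \<longrightarrow> x0 \<in> {0<..<1}"
      proof (intro ballI impI)
        fix x0 assume "x0 \<in> {0..1}" "P X al B lam x0 = 0"
        moreover have "x0 \<noteq> 0" using P0 calculation by auto
        moreover have "x0 \<noteq> 1" using P1' calculation by auto
        ultimately show "x0 \<in> {0<..<1}" by auto
      qed
    qed
  qed
  have part4: "deriv (P X al B lam) x \<ge> (2 * dd al B) * lam * x"
    if lam: "lam > X^2" and x: "x \<in> {0..1}" for lam x
  proof -
    have x01: "0 \<le> x^2" "x^2 \<le> 1" using x power_le_one[of x 2] by auto
    have "deriv (P X al B lam) x = 2*x*(- (X^2*B*(1-2*x^2)) + lam*(1+al-2*al*x^2))"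
      using P_deriv DERIV_imp_deriv by blast
    also have "\<dots> \<ge> 2*x*(lam * dd al B)"
      using inner[OF Xp al B0 B1 lam x01] x by (intro mult_left_mono) auto
    finally show ?thesis by (simp add: algebra_simps)
  qed
  have cpos: "2 * dd al B > 0" using dd_pos[OF al B1] by simp
  show ?thesis
    unfolding W X_def[symmetric]
  proof (intro conjI allI impI ballI)
    fix lam x assume "lam < X^2" "x \<in> {0..1::real}"
    thus "P X al B lam x > 0" using P1[OF Xp al B0 B1] by simp
  next
    fix lam x assume "lam = X^2" "x \<in> {0<..1::real}"
    thus "P X al B lam x > 0" using P2[OF Xp al B1] by simp
  next
    fix lam :: real assume "lam = X^2"
    thus "P X al B lam 0 = 0" using P20 by simp
  next
    fix lam assume "lam > X^2"
    thus "\<exists>!x0. x0 \<in> {0..1} \<and> P X al B lam x0 = 0" using part3 by blast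
  next
    fix lam x0 assume "lam > X^2" "x0 \<in> {0..1::real}" "P X al B lam x0 = 0"
    thus "x0 \<in> {0<..<1}" using part3 by blast
  next
    show "\<exists>c>0. \<forall>lam. lam > X^2 \<longrightarrow> (\<forall>x\<in>{0..1}. deriv (P X al B lam) x \<ge> c * lam * x)"
      using part4 cpos by blast
  qed
qed

end
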